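(* Fix a treatment group $d$, a post-treatment target age $a$, and a control group $d'$ with $d'>a\ge d$. Suppose the No Anticipation assumption holds for both genders $g\in\{f,m\}$ and both groups $d$ and $d'$, and suppose $$\frac{\gamma_{\mathrm{PT}}(f,d,d',a)}{APO(f,d,\infty,a)}=\frac{\gamma_{\mathrm{PT}}(m,d,d',a)}{APO(m,d,\infty,a)}.$$ Then $$\theta(f,d,a)-\theta(m,d,a)=\big[\delta_\theta(f,d,d',a)-\delta_\theta(m,d,d',a)\big]\,\frac{\delta_{\mathrm{APO}}(m,d,d',a)}{APO(m,d,\infty,a)},$$ so that the left-hand side is identified whenever $APO(m,d,\infty,a)$ is known.
   Context: Population of individuals with gender $G\in\{f,m\}$ and age at first childbirth $D$ (with $D=\infty$ meaning never). For each age $a$ and each (possibly counterfactual) first-birth age $d'\in\mathbb{N}\cup\{\infty\}$ there is a potential outcome (earnings) $Y_a(d')$; observed earnings satisfy consistency $Y_a=Y_a(D)$. Define $APO(g,d,d',a)=\mathbb{E}[Y_a(d')\mid G=g,D=d]$, $ATE(g,d,a)=APO(g,d,d,a)-APO(g,d,\infty,a)$, and $\theta(g,d,a)=ATE(g,d,a)/APO(g,d,\infty,a)$. Descriptive quantities: $\delta_{\mathrm{APO}}(g,d,d',a)=\mathbb{E}[Y_{d-1}\mid G=g,D=d]+\mathbb{E}[Y_a-Y_{d-1}\mid G=g,D=d']$, $\delta_{\mathrm{ATE}}(g,d,d',a)=\mathbb{E}[Y_a\mid G=g,D=d]-\delta_{\mathrm{APO}}(g,d,d',a)$, $\delta_\theta(g,d,d',a)=\delta_{\mathrm{ATE}}(g,d,d',a)/\delta_{\mathrm{APO}}(g,d,d',a)$.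 Parallel-trends violation: $\gamma_{\mathrm{PT}}(g,d,d',a)=APO(g,d,\infty,a)-APO(g,d,\infty,d-1)-[APO(g,d',\infty,a)-APO(g,d',\infty,d-1)]$. No Anticipation for gender $g$ and group $d$: $APO(g,d,d,b)=APO(g,d,\infty,b)$ for every age $b<d$. All denominators appearing are assumed nonzero. *)

theory Defs
  imports "HOL-Probability.Probability" "HOL-Library.Extended_Nat"
begin

datatype gender = Female | Male

text \<open>Population: probability space M; gender G; age at first birth D (\<infinity> = never);
  potential outcomes Yp a d' = Y_a(d'). Observed earnings via consistency: Y_a = Y_a(D).\<close>

definition obs :: "(nat \<Rightarrow> enat \<Rightarrow> 'a \<Rightarrow> real) \<Rightarrow> ('a \<Rightarrow> enat) \<Rightarrow> nat \<Rightarrow> 'a \<Rightarrow> real" where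
  "obs Yp D a \<omega> = Yp a (D \<omega>) \<omega>"

definition cexp :: "'a measure \<Rightarrow> ('a \<Rightarrow> gender) \<Rightarrow> ('a \<Rightarrow> enat) \<Rightarrow> ('a \<Rightarrow> real)
    \<Rightarrow> gender \<Rightarrow> enat \<Rightarrow> real" where
  "cexp M G D X g d =
     (let S = {\<omega> \<in> space M. G \<omega> = g \<and> D \<omega> = d} in (\<integral>\<omega>\<in>S. X \<omega> \<partial>M) / measure M S)"

definition APO :: "'a measure \<Rightarrow> ('a \<Rightarrow> gender) \<Rightarrow> ('a \<Rightarrow> enat) \<Rightarrow> (nat \<Rightarrow> enat \<Rightarrow> 'a \<Rightarrow> real)
    \<Rightarrow> gender \<Rightarrow> enat \<Rightarrow> enat \<Rightarrow> nat \<Rightarrow> real" where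
  "APO M G D Yp g d d' a = cexp M G D (Yp a d') g d"

definition ATE :: "'a measure \<Rightarrow> ('a \<Rightarrow> gender) \<Rightarrow> ('a \<Rightarrow> enat) \<Rightarrow> (nat \<Rightarrow> enat \<Rightarrow> 'a \<Rightarrow> real)
    \<Rightarrow> gender \<Rightarrow> enat \<Rightarrow> nat \<Rightarrow> real" where
  "ATE M G D Yp g d a = APO M G D Yp g d d a - APO M G D Yp g d \<infinity> a"

definition theta :: "'a measure \<Rightarrow> ('a \<Rightarrow> gender) \<Rightarrow> ('a \<Rightarrow> enat) \<Rightarrow> (nat \<Rightarrow> enat \<Rightarrow> 'a \<Rightarrow> real)
    \<Rightarrow> gender \<Rightarrow> enat \<Rightarrow> nat \<Rightarrow> real" where
  "theta M G D Yp g d a = ATE M G D Yp g d a / APO M G D Yp g d \<infinity> a"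

text \<open>Descriptive quantities; the treatment group d is a finite age (so that d-1 is an age).\<close>
definition delta_APO :: "'a measure \<Rightarrow> ('a \<Rightarrow> gender) \<Rightarrow> ('a \<Rightarrow> enat) \<Rightarrow> (nat \<Rightarrow> enat \<Rightarrow> 'a \<Rightarrow> real)
    \<Rightarrow> gender \<Rightarrow> nat \<Rightarrow> enat \<Rightarrow> nat \<Rightarrow> real" where
  "delta_APO M G D Yp g d d' a =
     cexp M G D (obs Yp D (d - 1)) g (enat d)
     + cexp M G D (\<lambda>\<omega>. obs Yp D a \<omega> - obs Yp D (d - 1) \<omega>) g d'"

definition delta_ATE :: "'a measure \<Rightarrow> ('a \<Rightarrow> gender) \<Rightarrow> ('a \<Rightarrow> enat) \<Rightarrow> (nat \<Rightarrow> enat \<Rightarrow> 'a \<Rightarrow> real)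
    \<Rightarrow> gender \<Rightarrow> nat \<Rightarrow> enat \<Rightarrow> nat \<Rightarrow> real" where
  "delta_ATE M G D Yp g d d' a =
     cexp M G D (obs Yp D a) g (enat d) - delta_APO M G D Yp g d d' a"

definition delta_theta :: "'a measure \<Rightarrow> ('a \<Rightarrow> gender) \<Rightarrow> ('a \<Rightarrow> enat) \<Rightarrow> (nat \<Rightarrow> enat \<Rightarrow> 'a \<Rightarrow> real)
    \<Rightarrow> gender \<Rightarrow> nat \<Rightarrow> enat \<Rightarrow> nat \<Rightarrow> real" where
  "delta_theta M G D Yp g d d' a =
     delta_ATE M G D Yp g d d' a / delta_APO M G D Yp g d d' a"

definition gamma_PT :: "'a measure \<Rightarrow> ('a \<Rightarrow> gender) \<Rightarrow> ('a \<Rightarrow> enat) \<Rightarrow> (nat \<Rightarrow> enat \<Rightarrow> 'a \<Rightarrow> real)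
    \<Rightarrow> gender \<Rightarrow> nat \<Rightarrow> enat \<Rightarrow> nat \<Rightarrow> real" where
  "gamma_PT M G D Yp g d d' a =
     APO M G D Yp g (enat d) \<infinity> a - APO M G D Yp g (enat d) \<infinity> (d - 1)
     - (APO M G D Yp g d' \<infinity> a - APO M G D Yp g d' \<infinity> (d - 1))"

definition no_anticipation :: "'a measure \<Rightarrow> ('a \<Rightarrow> gender) \<Rightarrow> ('a \<Rightarrow> enat) \<Rightarrow> (nat \<Rightarrow> enat \<Rightarrow> 'a \<Rightarrow> real)
    \<Rightarrow> gender \<Rightarrow> enat \<Rightarrow> bool" where
  "no_anticipation M G D Yp g d \<longleftrightarrow>
     (\<forall>b::nat. enat b < d \<longrightarrow> APO M G D Yp g d d b = APO M G D Yp g d \<infinity> b)"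

end

theory Submission
  imports Defs
begin

lemma cexp_obs:
  "cexp M G D (obs Yp D b) g e = cexp M G D (Yp b e) g e"
  unfolding cexp_def Let_def set_lebesgue_integral_def
  by (rule arg_cong[where f="\<lambda>x. x / _"], rule Bochner_Integration.integral_cong)
     (auto simp: obs_def indicator_def)

lemma cexp_obs_diff:
  assumes G: "G \<in> measurable M (count_space UNIV)"
    and D: "D \<in> measurable M (count_space UNIV)"
    and I: "\<And>b e. integrable M (Yp b e)"
  shows "cexp M G D (\<lambda>\<omega>. obs Yp D a \<omega> - obs Yp D c \<omega>) g e
       = cexp M G D (Yp a e) g e - cexp M G D (Yp c e) g e"
proof -
  let ?S = "{\<omega> \<in> space M. G \<omega> = g \<and> D \<omega> = e}"
  have S: "?S \<in> sets M"
  proof -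
    have "?S = G -` {g} \<inter> space M \<inter> (D -` {e} \<inter> space M)" by auto
    also have "\<dots> \<in> sets M"
      using measurable_sets[OF G, of "{g}"] measurable_sets[OF D, of "{e}"] by auto
    finally show ?thesis .
  qed
  have "(\<integral>\<omega>. indicator ?S \<omega> *\<^sub>R (obs Yp D a \<omega> - obs Yp D c \<omega>) \<partial>M)
      = (\<integral>\<omega>. indicator ?S \<omega> *\<^sub>R Yp a e \<omega> - indicator ?S \<omega> *\<^sub>R Yp c e \<omega> \<partial>M)"
    by (rule Bochner_Integration.integral_cong) (auto simp: obs_def indicator_def)
  also have "\<dots> = (\<integral>\<omega>. indicator ?S \<omega> *\<^sub>R Yp a e \<omega> \<partial>M) - (\<integral>\<omega>. indicator ?S \<omega> *\<^sub>R Yp c e \<omega> \<partial>M)"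
    apply (rule Bochner_Integration.integral_diff)
    using integrable_mult_indicator[OF S I] by auto
  finally show ?thesis
    unfolding cexp_def Let_def set_lebesgue_integral_def by (simp add: diff_divide_distrib)
qed

lemma alg:
  fixes Pf Pm Tf Tm r :: real
  assumes "Pf \<noteq> 0" "Pm \<noteq> 0" "1 - r \<noteq> 0"
  shows "(Tf / Pf - 1) - (Tm / Pm - 1)
     = ((Tf / (Pf * (1 - r)) - 1) - (Tm / (Pm * (1 - r)) - 1)) * (Pm * (1 - r) / Pm)"
proof -
  have "((Tf / (Pf * (1 - r)) - 1) - (Tm / (Pm * (1 - r)) - 1)) * (Pm * (1 - r) / Pm)
     = (Tf / (Pf * (1 - r)) - Tm / (Pm * (1 - r))) * (1 - r)" using assms by simp
  also have "\<dots> = Tf / (Pf * (1 - r)) * (1 - r) - Tm / (Pm * (1 - r)) * (1 - r)"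
    by (simp add: left_diff_distrib)
  also have "\<dots> = Tf / Pf - Tm / Pm" using assms by simp
  finally show ?thesis by simp
qed

theorem proposition2:
  fixes M :: "'a measure" and G :: "'a \<Rightarrow> gender" and D :: "'a \<Rightarrow> enat"
    and Yp :: "nat \<Rightarrow> enat \<Rightarrow> 'a \<Rightarrow> real"
    and d :: nat and d' :: enat and a :: nat
  assumes "prob_space M"
    and "G \<in> measurable M (count_space UNIV)"
    and "D \<in> measurable M (count_space UNIV)"
    and "\<And>b e. integrable M (Yp b e)"
    and "1 \<le> d" and "d \<le> a" and "enat a < d'"
    and "\<And>g. no_anticipation M G D Yp g (enat d)"
    and "\<And>g. no_anticipation M G D Yp g d'"
    and "\<And>g. APO M G D Yp g (enat d) \<infinity> a \<noteq> 0"
    and "\<And>g. delta_APO M G D Yp g d d' a \<noteq> 0"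
    and "gamma_PT M G D Yp Female d d' a / APO M G D Yp Female (enat d) \<infinity> a
       = gamma_PT M G D Yp Male d d' a / APO M G D Yp Male (enat d) \<infinity> a"
  shows "theta M G D Yp Female (enat d) a - theta M G D Yp Male (enat d) a
       = (delta_theta M G D Yp Female d d' a - delta_theta M G D Yp Male d d' a)
         * (delta_APO M G D Yp Male d d' a / APO M G D Yp Male (enat d) \<infinity> a)"
proof -
  have lt1: "enat (d - 1) < enat d" using assms(5) by simp
  have lt2: "enat (d - 1) < d'" using assms(6,7) 
    by (metis diff_le_self enat_ord_simps(1) le_less_trans order.trans)
  have dA: "delta_APO M G D Yp g d d' a
      = APO M G D Yp g (enat d) \<infinity> a - gamma_PT M G D Yp g d d' a" for g
  proof -
    have "APO M G D Yp g (enat d) (enat d) (d-1) = APO M G D Yp g (enat d) \<infinity> (d-1)"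
      using assms(8)[of g] lt1 unfolding no_anticipation_def by blast
    moreover have "APO M G D Yp g d' d' (d-1) = APO M G D Yp g d' \<infinity> (d-1)"
      using assms(9)[of g] lt2 unfolding no_anticipation_def by blast
    moreover have "APO M G D Yp g d' d' a = APO M G D Yp g d' \<infinity> a"
      using assms(9)[of g] assms(7) unfolding no_anticipation_def by blast
    ultimately show ?thesis
      unfolding delta_APO_def gamma_PT_def cexp_obs cexp_obs_diff[OF assms(2,3,4)]
      by (simp add: APO_def)
  qed
  have dT: "delta_theta M G D Yp g d d' a
      = APO M G D Yp g (enat d) (enat d) a / delta_APO M G D Yp g d d' a - 1" for g
    using assms(11)[of g]
    unfolding delta_theta_def delta_ATE_def cexp_obs by (simp add: APO_def field_simps)
  have th: "theta M G D Yp g (enat d) a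
      = APO M G D Yp g (enat d) (enat d) a / APO M G D Yp g (enat d) \<infinity> a - 1" for g
    using assms(10)[of g] unfolding theta_def ATE_def by (simp add: field_simps)
  define r where "r = gamma_PT M G D Yp Male d d' a / APO M G D Yp Male (enat d) \<infinity> a"
  have A: "delta_APO M G D Yp g d d' a = APO M G D Yp g (enat d) \<infinity> a * (1 - r)" for g
  proof -
    have "gamma_PT M G D Yp g d d' a = r * APO M G D Yp g (enat d) \<infinity> a"
      using assms(10)[of g] assms(12) unfolding r_def by (cases g) (auto simp: field_simps)
    thus ?thesis using dA[of g] by (simp add: algebra_simps)
  qed
  have r1: "1 - r \<noteq> 0" using assms(11)[of Male] A[of Male] by auto
  show ?thesis
    unfolding th dT A by (rule alg[OF assms(10)[of Female] assms(10)[of Male] r1])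
qed

end
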